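(* For every $n\ge 1$, the sequence $\Lambda_n$ (defined in the context) contains every chain of the Greene–Kleitman symmetric chain decomposition of $Q_n$ exactly once.
   Context: Let $D$ be the set of all bitstrings (including the empty string $\varepsilon$) with equally many $0$s and $1$s such that every prefix contains at least as many $0$s as $1$s. The chains of the Greene–Kleitman symmetric chain decomposition of the hypercube $Q_n$ are exactly the paths encoded by strings of length $n$ over $\{0,1,*\}$ of the form $u_0*u_1*\cdots*u_{h-1}*u_h$ with $u_0,\ldots,u_h\in D$ (any $h\ge 0$); the vertices of such a chain are obtained by replacing the $*$s by $i$ ones followed by $h-i$ zeros, $i=0,\ldots,h$. The length $|C|$ of a chain $C$ is its number of $*$s. For a string $C$ over $\{0,1,*\}$ with at least two $*$s, $f(C)$ (resp. $\ell(C)$) is obtained by replacing the first two (resp. last two) $*$s by $0$ and $1$, respectively. For a sequence $\Gamma$, $\Gamma^R$ is its reversal. Define $\Lambda_0:=\varepsilon$ (the sequence with the single empty chain) and $\Lambda_1:=*$. For $n\ge 0$ and $\Lambda_n=C_1,\ldots,C_N$ set $\Lambda_{n+2}:=\rho(C_1),\ldots,\rho(C_N)$, where $\rho(C):=\lambda(C)$ if $|C|\equiv n\pmod 4$ and $\rho(C):=\lambda(C)^R$ otherwise, and for even $n$: $\lambda(C):=*C*,\ f( *C* ),\ f(\ell( *C* )),\ \ell( *C* )$ if $|C|\ge2$ and $\lambda(C):=*C*,\ 0C1$ if $|C|=0$; for odd $n$: $\lambda(C):=*C*,\ \ell( *C* ),\ \ell(f( *C* )),\ f( *C* )$ if $|C|\ge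 3$ and $\lambda(C):=*C*,\ \ell( *C* ),\ f( *C* )$ if $|C|=1$. *)

theory Defs
  imports Main
begin

datatype sym = Zero | One | Star

definition cnt :: "sym \<Rightarrow> sym list \<Rightarrow> nat" where
  "cnt a w = length (filter (\<lambda>x. x = a) w)"

definition dyck :: "sym list \<Rightarrow> bool" where
  "dyck w \<longleftrightarrow> set w \<subseteq> {Zero, One} \<and> cnt Zero w = cnt One w \<and>
     (\<forall>k \<le> length w. cnt One (take k w) \<le> cnt Zero (take k w))"

fun join :: "sym list list \<Rightarrow> sym list" where
  "join [] = []"
| "join [u] = u"
| "join (u # v # us) = u @ Star # join (v # us)"

definition gk_chain :: "sym list \<Rightarrow> bool" where
  "gk_chain C \<longleftrightarrow> (\<exists>us. us \<noteq> [] \<and> (\<forall>u\<in>set us. dyck u) \<and> C = join us)"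

definition clen :: "sym list \<Rightarrow> nat" where
  "clen C = cnt Star C"

fun repl1 :: "sym \<Rightarrow> sym list \<Rightarrow> sym list" where
  "repl1 b [] = []"
| "repl1 b (x # xs) = (if x = Star then b # xs else x # repl1 b xs)"

fun repl2 :: "sym \<Rightarrow> sym \<Rightarrow> sym list \<Rightarrow> sym list" where
  "repl2 a b [] = []"
| "repl2 a b (x # xs) = (if x = Star then a # repl1 b xs else x # repl2 a b xs)"

definition ff :: "sym list \<Rightarrow> sym list" where
  "ff C = repl2 Zero One C"

(* last two *s replaced by 0 and 1 respectively *)
definition ll :: "sym list \<Rightarrow> sym list" where
  "ll C = rev (repl2 One Zero (rev C))"

definition lam :: "nat \<Rightarrow> sym list \<Rightarrow> sym list list" where
  "lam n C = (let X = Star # C @ [Star] in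
     if even n then
       (if clen C \<ge> 2 then [X, ff X, ff (ll X), ll X] else [X, Zero # C @ [One]])
     else
       (if clen C \<ge> 3 then [X, ll X, ll (ff X), ff X] else [X, ll X, ff X]))"

definition rho :: "nat \<Rightarrow> sym list \<Rightarrow> sym list list" where
  "rho n C = (if clen C mod 4 = n mod 4 then lam n C else rev (lam n C))"

fun Lambda :: "nat \<Rightarrow> sym list list" where
  "Lambda 0 = [[]]"
| "Lambda (Suc 0) = [[Star]]"
| "Lambda (Suc (Suc n)) = concat (map (rho n) (Lambda n))"

end

theory Submission
  imports Defs
begin

lemma cnt_simps[simp]: "cnt a [] = 0"
  "cnt a (x # w) = (if x = a then Suc (cnt a w) else cnt a w)"
  "cnt a (u @ v) = cnt a u + cnt a v"
  by (auto simp: cnt_def)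

fun chk :: "nat \<Rightarrow> sym list \<Rightarrow> bool" where
  "chk k [] = (k = 0)"
| "chk k (Zero # w) = chk (Suc k) w"
| "chk k (One # w) = (k > 0 \<and> chk (k - 1) w)"
| "chk k (Star # w) = False"

lemma all_le_Suc: "(\<forall>j\<le>Suc m. P j) \<longleftrightarrow> P 0 \<and> (\<forall>j\<le>m. P (Suc j))"
  apply auto
  apply (case_tac j)
   apply auto
  done

lemma chk_iff: "chk k w \<longleftrightarrow> set w \<subseteq> {Zero, One} \<and> k + cnt Zero w = cnt One w \<and>
   (\<forall>j\<le>length w. cnt One (take j w) \<le> k + cnt Zero (take j w))"
proof (induction w arbitrary: k)
  case Nil then show ?case by auto
next
  case (Cons x w)
  show ?case
  proof (cases x)
    case Zero
    then show ?thesis using Cons.IH[of "Suc k"] by (simp add: all_le_Suc)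
  next
    case One
    show ?thesis
    proof (cases k)
      case 0
      have "\<not> (\<forall>j\<le>length (One # w). cnt One (take j (One # w)) \<le> 0 + cnt Zero (take j (One # w)))"
      proof
        assume H: "\<forall>j\<le>length (One # w). cnt One (take j (One # w)) \<le> 0 + cnt Zero (take j (One # w))"
        have "cnt One (take 1 (One # w)) \<le> 0 + cnt Zero (take 1 (One # w))" using H[rule_format, of 1] by simp
        then show False by simp
      qed
      then show ?thesis using One 0 by auto
    next
      case (Suc k')
      then show ?thesis using One Cons.IH[of k'] by (simp add: all_le_Suc)
    qed
  next
    case Star
    then show ?thesis by simp
  qed
qed

lemma dyck_chk: "dyck w \<longleftrightarrow> chk 0 w"
  by (simp add: dyck_def chk_iff)

lemma chk_append: "chk j a \<Longrightarrow> chk (k + j) (a @ w) = chk k w"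
proof (induction a arbitrary: j k)
  case Nil then show ?case by simp
next
  case (Cons x a)
  show ?case
  proof (cases x)
    case Zero then show ?thesis using Cons.prems Cons.IH[of "Suc j" k] by simp
  next
    case One
    then have "j > 0" "chk (j - 1) a" using Cons.prems by auto
    then show ?thesis using One Cons.IH[of "j - 1" k] by simp
  next
    case Star then show ?thesis using Cons by simp
  qed
qed

lemma chk_append0: "chk 0 a \<Longrightarrow> chk k (a @ w) = chk k w"
  using chk_append[of 0 a k w] by simp

lemma chk_le: "chk j a \<Longrightarrow> chk k (a @ w) \<Longrightarrow> j \<le> k"
proof (induction a arbitrary: j k)
  case Nil then show ?case by simp
next
  case (Cons x a)
  show ?case
  proof (cases x)
    case Zero then show ?thesis using Cons by (auto dest: Cons.IH)
  next
    case One
    then show ?thesis using Cons.prems Cons.IH[of "j - 1" "k - 1"] by auto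
  next
    case Star then show ?thesis using Cons by simp
  qed
qed

lemma chk_split: "chk (Suc k) w \<Longrightarrow> \<exists>a b. w = a @ One # b \<and> chk 0 a \<and> chk k b"
proof (induction "length w" arbitrary: w k rule: less_induct)
  case less
  show ?case
  proof (cases w)
    case Nil then show ?thesis using less by simp
  next
    case (Cons x w')
    show ?thesis
    proof (cases x)
      case One then show ?thesis using less Cons by (intro exI[of _ "[]"] exI[of _ w']) auto
    next
      case Star then show ?thesis using less Cons by simp
    next
      case Zero
      then have "chk (Suc (Suc k)) w'" using less Cons by simp
      then obtain a b where ab: "w' = a @ One # b" "chk 0 a" "chk (Suc k) b"
        using less(1)[of w' "Suc k"] Cons by auto
      then obtain c d where cd: "b = c @ One # d" "chk 0 c" "chk k d"
        using less(1)[of b k] Cons by auto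
      have "chk 0 (Zero # a @ One # c)"
        using chk_append0[OF ab(2), of 1 "One # c"] cd by simp
      then show ?thesis using ab cd Cons Zero
        by (intro exI[of _ "Zero # a @ One # c"] exI[of _ d]) auto
    qed
  qed
qed

lemma dyck_dec: "dyck w \<Longrightarrow> w \<noteq> [] \<Longrightarrow> \<exists>a b. w = Zero # a @ One # b \<and> dyck a \<and> dyck b"
proof -
  assume d: "dyck w" and ne: "w \<noteq> []"
  then obtain x w' where w: "w = x # w'" by (cases w) auto
  have "chk 0 w" using d dyck_chk by simp
  then have "x = Zero" "chk 1 w'" using w by (cases x; simp)+
  then show ?thesis using chk_split[of 0 w'] w by (auto simp: dyck_chk)
qed

lemma dyck_comb: "dyck a \<Longrightarrow> dyck b \<Longrightarrow> dyck (Zero # a @ One # b)"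
  using chk_append0[of a 1 "One # b"] by (simp add: dyck_chk)

lemma dyck_combR: "dyck c \<Longrightarrow> dyck d \<Longrightarrow> dyck (c @ Zero # d @ [One])"
  using chk_append0[of c 0 "Zero # d @ [One]"] chk_append0[of d 1 "[One]"] by (simp add: dyck_chk)

lemma dyck_decR: "dyck w \<Longrightarrow> w \<noteq> [] \<Longrightarrow> \<exists>c d. w = c @ Zero # d @ [One] \<and> dyck c \<and> dyck d"
proof (induction "length w" arbitrary: w rule: less_induct)
  case less
  obtain a b where ab: "w = Zero # a @ One # b" "dyck a" "dyck b" using dyck_dec less by blast
  show ?case
  proof (cases "b = []")
    case True then show ?thesis using ab by (intro exI[of _ "[]"] exI[of _ a]) (auto simp: dyck_chk)
  next
    case False
    then obtain c d where cd: "b = c @ Zero # d @ [One]" "dyck c" "dyck d"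
      using less(1)[of b] ab by auto
    show ?thesis using ab cd dyck_comb[OF ab(2) cd(2)]
      by (intro exI[of _ "Zero # a @ One # c"] exI[of _ d]) auto
  qed
qed

lemma dec_uniq: "dyck a \<Longrightarrow> dyck a' \<Longrightarrow> a @ One # b = a' @ One # b' \<Longrightarrow> a = a' \<and> b = b'"
proof -
  assume d: "dyck a" "dyck a'" and e: "a @ One # b = a' @ One # b'"
  from e obtain us where "(a = a' @ us \<and> us @ One # b = One # b') \<or> (a @ us = a' \<and> One # b = us @ One # b')"
    by (auto simp: append_eq_append_conv2)
  then show ?thesis
  proof
    assume h: "a = a' @ us \<and> us @ One # b = One # b'"
    show ?thesis
    proof (cases us)
      case Nil then show ?thesis using h by simp
    next
      case (Cons y e')
      then have "a = a' @ One # e'" using h by auto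
      then have "chk 0 (One # e')" using d chk_append0[of a' 0 "One # e'"] by (simp add: dyck_chk)
      then show ?thesis by simp
    qed
  next
    assume h: "a @ us = a' \<and> One # b = us @ One # b'"
    show ?thesis
    proof (cases us)
      case Nil then show ?thesis using h by simp
    next
      case (Cons y e')
      then have "a' = a @ One # e'" using h by auto
      then have "chk 0 (One # e')" using d chk_append0[of a 0 "One # e'"] by (simp add: dyck_chk)
      then show ?thesis by simp
    qed
  qed
qed

lemma decR_aux: "dyck c \<Longrightarrow> dyck d \<Longrightarrow> c' = c @ Zero # e \<Longrightarrow> d = e @ Zero # d' \<Longrightarrow> dyck c' \<Longrightarrow> False"
proof -
  assume d: "dyck c" "dyck d" and 1: "c' = c @ Zero # e" "d = e @ Zero # d'" and c': "dyck c'"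
  have "chk 0 (c @ Zero # e)" using c' 1 by (simp add: dyck_chk)
  then have "chk 0 (Zero # e)" using d(1) chk_append0[of c 0 "Zero # e"] by (simp add: dyck_chk)
  then have a: "chk 1 e" by simp
  have b: "chk 0 (e @ Zero # d')" using 1 d by (simp add: dyck_chk)
  show False using chk_le[OF a b] by simp
qed

lemma decR_uniq0: "dyck c \<Longrightarrow> dyck c' \<Longrightarrow> dyck d \<Longrightarrow> dyck d' \<Longrightarrow> c @ Zero # d = c' @ Zero # d' \<Longrightarrow> c = c' \<and> d = d'"
proof -
  assume d: "dyck c" "dyck c'" "dyck d" "dyck d'" and e: "c @ Zero # d = c' @ Zero # d'"
  from e obtain us where "(c = c' @ us \<and> us @ Zero # d = Zero # d') \<or> (c @ us = c' \<and> Zero # d = us @ Zero # d')"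
    by (auto simp: append_eq_append_conv2)
  then show ?thesis
  proof
    assume h: "c = c' @ us \<and> us @ Zero # d = Zero # d'"
    show ?thesis
    proof (cases us)
      case Nil then show ?thesis using h by simp
    next
      case (Cons y e')
      then have "c = c' @ Zero # e'" "d' = e' @ Zero # d" using h by simp_all
      then show ?thesis using decR_aux[of c' d' c e' d] d by blast
    qed
  next
    assume h: "c @ us = c' \<and> Zero # d = us @ Zero # d'"
    show ?thesis
    proof (cases us)
      case Nil then show ?thesis using h by simp
    next
      case (Cons y e')
      then have "c' = c @ Zero # e'" "d = e' @ Zero # d'" using h by auto
      then show ?thesis using decR_aux[of c d c' e' d'] d by blast
    qed
  qed
qed

lemma decR_uniq: "dyck c \<Longrightarrow> dyck c' \<Longrightarrow> dyck d \<Longrightarrow> dyck d' \<Longrightarrow>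
   c @ Zero # d @ [One] = c' @ Zero # d' @ [One] \<Longrightarrow> c = c' \<and> d = d'"
  using decR_uniq0[of c c' d d'] append_same_eq[of "c @ Zero # d" "[One]" "c' @ Zero # d'"] by simp

lemma dyck_SF: "dyck u \<Longrightarrow> Star \<notin> set u"
  by (auto simp: dyck_def)

lemma dyck_Nil[simp]: "dyck []"
  by (simp add: dyck_chk)

lemma join_Cons_app: "join ((x @ y) # rest) = x @ join (y # rest)"
  by (cases rest) auto

lemma join_snoc: "us \<noteq> [] \<Longrightarrow> join (us @ [v]) = join us @ Star # v"
  by (induction us rule: join.induct) auto

lemma join_Nil_Cons: "us \<noteq> [] \<Longrightarrow> join ([] # us) = Star # join us"
  by (cases us) auto

lemma X_join: "us \<noteq> [] \<Longrightarrow> Star # join us @ [Star] = join ([] # us @ [[]])"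
  by (simp add: join_Nil_Cons join_snoc)

lemma split_star: "Star \<notin> set u \<Longrightarrow> Star \<notin> set v \<Longrightarrow> u @ Star # x = v @ Star # y \<Longrightarrow> u = v \<and> x = y"
proof (induction u arbitrary: v)
  case Nil then show ?case by (cases v) auto
next
  case (Cons a u) then show ?case by (cases v) auto
qed

lemma star_in_join: "Star \<in> set (join (u # v # us))"
  by simp

lemma join_inj: "\<forall>u\<in>set us. Star \<notin> set u \<Longrightarrow> \<forall>v\<in>set vs. Star \<notin> set v \<Longrightarrow> us \<noteq> [] \<Longrightarrow> vs \<noteq> []
  \<Longrightarrow> join us = join vs \<Longrightarrow> us = vs"
proof (induction us arbitrary: vs rule: join.induct)
  case 1 then show ?case by simp
next
  case (2 u)
  then show ?case
  proof (cases vs rule: join.cases)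
    case (3 v w ws)
    then have "Star \<in> set (join vs)" by simp
    then show ?thesis using 2 by simp
  qed auto
next
  case (3 u v us)
  show ?case
  proof (cases vs rule: join.cases)
    case 1 then show ?thesis using 3 by simp
  next
    case (2 w)
    have e: "join (u # v # us) = w" using "3.prems" 2 by simp
    have "Star \<in> set w" using star_in_join[of u v us] unfolding e .
    then show ?thesis using "3.prems" 2 by simp
  next
    case (3 w w' ws)
    then have "u = w \<and> join (v # us) = join (w' # ws)"
      using split_star[of u w "join (v # us)" "join (w' # ws)"] "3.prems" by simp
    then show ?thesis using "3.IH"[of "w' # ws"] "3.prems" 3 by simp
  qed
qed

lemma cnt_SF: "Star \<notin> set u \<Longrightarrow> cnt Star u = 0"
  by (induction u) auto

lemma cnt_join_star: "\<forall>u\<in>set us. Star \<notin> set u \<Longrightarrow> cnt Star (join us) = length us - 1"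
  by (induction us rule: join.induct) (auto simp: cnt_SF)

lemma cnt01_join: "\<forall>u\<in>set us. dyck u \<Longrightarrow> cnt Zero (join us) = cnt One (join us)"
  by (induction us rule: join.induct) (auto simp: dyck_def)

lemma len_cnt: "length w = cnt Zero w + cnt One w + cnt Star w"
proof (induction w)
  case Nil then show ?case by simp
next
  case (Cons x w) then show ?case by (cases x) auto
qed

lemma repl1_app: "Star \<notin> set b \<Longrightarrow> repl1 y (b @ Star # w) = b @ y # w"
  by (induction b) auto

lemma repl2_app: "Star \<notin> set a \<Longrightarrow> repl2 x y (a @ Star # w) = a @ x # repl1 y w"
  by (induction a) auto

lemma len_repl1[simp]: "length (repl1 y w) = length w"
  by (induction w) auto

lemma len_repl2[simp]: "length (repl2 x y w) = length w"
  by (induction w) auto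

lemma len_ff[simp]: "length (ff w) = length w"
  by (simp add: ff_def)

lemma len_ll[simp]: "length (ll w) = length w"
  by (simp add: ll_def)

lemma repl2_join: "Star \<notin> set a \<Longrightarrow> Star \<notin> set b \<Longrightarrow>
  repl2 x y (join (a # b # c # rest)) = join ((a @ x # b @ y # c) # rest)"
proof -
  assume a: "Star \<notin> set a" and b: "Star \<notin> set b"
  have "join ((a @ x # b @ y # c) # rest) = a @ x # b @ y # join (c # rest)"
    using join_Cons_app[of "a @ x # b @ [y]" c rest] by simp
  moreover have "repl2 x y (join (a # b # c # rest)) = a @ x # b @ y # join (c # rest)"
    using a b by (simp add: repl2_app repl1_app)
  ultimately show ?thesis by simp
qed

lemma ff_join: "Star \<notin> set a \<Longrightarrow> Star \<notin> set b \<Longrightarrow>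
  ff (join (a # b # c # rest)) = join ((a @ Zero # b @ One # c) # rest)"
  unfolding ff_def by (rule repl2_join)

lemma rev_join: "rev (join us) = join (rev (map rev us))"
proof (induction us rule: join.induct)
  case (3 u v us)
  then show ?case using join_snoc[of "rev (map rev us) @ [rev v]" "rev u"] by simp
qed auto

lemma ll_join: "Star \<notin> set b \<Longrightarrow> Star \<notin> set c \<Longrightarrow>
  ll (join (rest @ [a, b, c])) = join (rest @ [a @ Zero # b @ One # c])"
proof -
  assume b: "Star \<notin> set b" and c: "Star \<notin> set c"
  have "rev (join (rest @ [a, b, c])) = join (rev c # rev b # rev a # rev (map rev rest))"
    by (simp add: rev_join)
  then have "repl2 One Zero (rev (join (rest @ [a, b, c]))) =
      join ((rev c @ One # rev b @ Zero # rev a) # rev (map rev rest))"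
    using b c repl2_join[of "rev c" "rev b" One Zero "rev a" "rev (map rev rest)"] by (simp del: join.simps(3))
  then have "ll (join (rest @ [a, b, c])) = rev (join ((rev c @ One # rev b @ Zero # rev a) # rev (map rev rest)))"
    by (simp add: ll_def)
  also have "\<dots> = join (rest @ [a @ Zero # b @ One # c])"
    by (simp add: rev_join rev_map[symmetric])
  finally show ?thesis .
qed

definition dec :: "sym list \<Rightarrow> sym list \<times> sym list" where
  "dec w = (SOME p. w = Zero # fst p @ One # snd p \<and> dyck (fst p) \<and> dyck (snd p))"

definition decR :: "sym list \<Rightarrow> sym list \<times> sym list" where
  "decR w = (SOME p. w = fst p @ Zero # snd p @ [One] \<and> dyck (fst p) \<and> dyck (snd p))"

lemma dec_eq[simp]: "dyck b \<Longrightarrow> dyck c \<Longrightarrow> dec (Zero # b @ One # c) = (b, c)"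
proof -
  assume b: "dyck b" and c: "dyck c"
  let ?P = "\<lambda>p. Zero # b @ One # c = Zero # fst p @ One # snd p \<and> dyck (fst p) \<and> dyck (snd p)"
  have "?P (b, c)" using b c by simp
  then have "?P (dec (Zero # b @ One # c))" unfolding dec_def by (rule someI)
  then have "fst (dec (Zero # b @ One # c)) = b \<and> snd (dec (Zero # b @ One # c)) = c"
    using dec_uniq[of b "fst (dec (Zero # b @ One # c))" c "snd (dec (Zero # b @ One # c))"] b by auto
  then show ?thesis by (metis prod.collapse)
qed

lemma decR_eq[simp]: "dyck c \<Longrightarrow> dyck d \<Longrightarrow> decR (c @ Zero # d @ [One]) = (c, d)"
proof -
  assume b: "dyck c" and c: "dyck d"
  let ?P = "\<lambda>p. c @ Zero # d @ [One] = fst p @ Zero # snd p @ [One] \<and> dyck (fst p) \<and> dyck (snd p)"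
  have "?P (c, d)" using b c by simp
  then have "?P (decR (c @ Zero # d @ [One]))" unfolding decR_def by (rule someI)
  then have "fst (decR (c @ Zero # d @ [One])) = c \<and> snd (decR (c @ Zero # d @ [One])) = d"
    using decR_uniq[of c "fst (decR (c @ Zero # d @ [One]))" d "snd (decR (c @ Zero # d @ [One]))"] b c by auto
  then show ?thesis by (metis prod.collapse)
qed

definition pF :: "sym list list \<Rightarrow> sym list list" where
  "pF vs = (if hd vs = [] then tl vs else fst (dec (hd vs)) # snd (dec (hd vs)) # tl vs)"

definition pL :: "sym list list \<Rightarrow> sym list list" where
  "pL vs = (if last vs = [] then butlast vs else butlast vs @ [fst (decR (last vs)), snd (decR (last vs))])"

definition pU :: "sym list list \<Rightarrow> sym list list" where
  "pU vs = pL (pF vs)"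

lemmas dyck_comb' = dyck_comb dyck_combR

lemma P1: "pU ([] # us @ [[]]) = us"
  by (simp add: pU_def pF_def pL_def)

lemma P2: "dyck b \<Longrightarrow> dyck c \<Longrightarrow> pU ((Zero # b @ One # c) # r @ [[]]) = b # c # r"
  by (simp add: pU_def pF_def pL_def)

lemma P3: "dyck c \<Longrightarrow> dyck d \<Longrightarrow> pU ([] # r @ [c @ Zero # d @ [One]]) = r @ [c, d]"
  by (simp add: pU_def pF_def pL_def)

lemma P4: "dyck b \<Longrightarrow> dyck c \<Longrightarrow> dyck c' \<Longrightarrow> dyck d' \<Longrightarrow>
   pU ((Zero # b @ One # c) # r @ [c' @ Zero # d' @ [One]]) = b # c # r @ [c', d']"
  by (simp add: pU_def pF_def pL_def)

lemma P5: "dyck b \<Longrightarrow> dyck c \<Longrightarrow> dyck d \<Longrightarrow>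
   pU [Zero # b @ One # c @ Zero # d @ [One]] = [b, c, d]"
  by (simp add: pU_def pF_def pL_def dyck_combR)

lemma P6: "dyck b \<Longrightarrow> pU [Zero # b @ [One]] = [b]"
  using dec_eq[of b "[]"] by (simp add: pU_def pF_def pL_def)

definition comps :: "sym list \<Rightarrow> sym list list" where
  "comps D = (SOME vs. vs \<noteq> [] \<and> (\<forall>v\<in>set vs. dyck v) \<and> join vs = D)"

lemma comps_join: "vs \<noteq> [] \<Longrightarrow> \<forall>v\<in>set vs. dyck v \<Longrightarrow> comps (join vs) = vs"
proof -
  assume a: "vs \<noteq> []" "\<forall>v\<in>set vs. dyck v"
  let ?P = "\<lambda>ws. ws \<noteq> [] \<and> (\<forall>v\<in>set ws. dyck v) \<and> join ws = join vs"
  have "?P vs" using a by simp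
  then have "?P (comps (join vs))" unfolding comps_def by (rule someI)
  then show ?thesis using join_inj[of "comps (join vs)" vs] a dyck_SF by blast
qed

definition par :: "sym list \<Rightarrow> sym list" where
  "par D = join (pU (comps D))"

definition GK :: "nat \<Rightarrow> sym list set" where
  "GK n = {C. length C = n \<and> gk_chain C}"

lemma clen_join: "\<forall>u\<in>set us. dyck u \<Longrightarrow> clen (join us) = length us - 1"
  using cnt_join_star[of us] dyck_SF by (auto simp: clen_def)

lemma par_join: "\<forall>u\<in>set us. dyck u \<Longrightarrow> length (join us) = 2 * cnt Zero (join us) + (length us - 1)"
  using len_cnt[of "join us"] cnt01_join[of us] clen_join[of us] by (simp add: clen_def)

lemma K2: "dyck b \<Longrightarrow> dyck c \<Longrightarrow> ff (Star # join (b # c # r) @ [Star]) = join ((Zero # b @ One # c) # r @ [[]])"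
proof -
  assume b: "dyck b" and c: "dyck c"
  have "Star # join (b # c # r) @ [Star] = join ([] # b # c # (r @ [[]]))"
    using X_join[of "b # c # r"] by simp
  then show ?thesis using ff_join[of "[]" b c "r @ [[]]"] dyck_SF[OF b] by simp
qed

lemma K3: "dyck c \<Longrightarrow> dyck d \<Longrightarrow> ll (Star # join (r @ [c, d]) @ [Star]) = join ([] # r @ [c @ Zero # d @ [One]])"
proof -
  assume c: "dyck c" and d: "dyck d"
  have "Star # join (r @ [c, d]) @ [Star] = join (([] # r) @ [c, d, []])"
    using X_join[of "r @ [c, d]"] by simp
  then show ?thesis using ll_join[of d "[]" "[] # r" c] dyck_SF[OF d] by simp
qed

lemma K4a: "dyck b \<Longrightarrow> dyck c \<Longrightarrow> dyck c' \<Longrightarrow> dyck d' \<Longrightarrow>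
  ff (ll (Star # join (b # c # r @ [c', d']) @ [Star])) = join ((Zero # b @ One # c) # r @ [c' @ Zero # d' @ [One]])"
proof -
  assume a: "dyck b" "dyck c" "dyck c'" "dyck d'"
  have "ll (Star # join (b # c # r @ [c', d']) @ [Star]) = join ([] # b # c # (r @ [c' @ Zero # d' @ [One]]))"
    using K3[of c' d' "b # c # r"] a by simp
  then show ?thesis using ff_join[of "[]" b c "r @ [c' @ Zero # d' @ [One]]"] dyck_SF[OF a(1)] by simp
qed

lemma K4b: "dyck b \<Longrightarrow> dyck c \<Longrightarrow> dyck c' \<Longrightarrow> dyck d' \<Longrightarrow>
  ll (ff (Star # join (b # c # r @ [c', d']) @ [Star])) = join ((Zero # b @ One # c) # r @ [c' @ Zero # d' @ [One]])"
proof -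
  assume a: "dyck b" "dyck c" "dyck c'" "dyck d'"
  have "ff (Star # join (b # c # r @ [c', d']) @ [Star]) = join (((Zero # b @ One # c) # r) @ [c', d', []])"
    using K2[of b c "r @ [c', d']"] a by simp
  then show ?thesis using ll_join[of d' "[]" "(Zero # b @ One # c) # r" c'] dyck_SF[OF a(4)] by simp
qed

lemma K5: "dyck b \<Longrightarrow> dyck c \<Longrightarrow> dyck d \<Longrightarrow>
  ff (ll (Star # join [b, c, d] @ [Star])) = join [Zero # b @ One # c @ Zero # d @ [One]]"
proof -
  assume a: "dyck b" "dyck c" "dyck d"
  have "ll (Star # join [b, c, d] @ [Star]) = join ([] # b # (c @ Zero # d @ [One]) # [])"
    using K3[of c d "[b]"] a by simp
  then show ?thesis using ff_join[of "[]" b "c @ Zero # d @ [One]" "[]"] dyck_SF[OF a(1)] by simp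
qed

lemma snoc2_ex: "length us \<ge> 2 \<Longrightarrow> \<exists>r c d. us = r @ [c, d]"
proof -
  assume "length us \<ge> 2"
  then obtain d c r' where "rev us = d # c # r'"
    by (cases "rev us"; cases "tl (rev us)") auto
  then have "us = rev r' @ [c, d]" by (metis append.assoc append_Cons append_Nil rev.simps(2) rev_rev_ident)
  then show ?thesis by blast
qed

lemma four_ex: "length us \<ge> 4 \<Longrightarrow> \<exists>b c r c' d'. us = b # c # r @ [c', d']"
proof -
  assume l: "length us \<ge> 4"
  then obtain b c t where u: "us = b # c # t" by (cases us; cases "tl us") auto
  then have "length t \<ge> 2" using l by simp
  then obtain r c' d' where "t = r @ [c', d']" using snoc2_ex by blast
  then show ?thesis using u by blast
qed

lemma kids:
  assumes ne: "us \<noteq> []" and dy: "\<forall>u\<in>set us. dyck u" and len: "length (join us) = n"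
  shows "\<exists>vss. lam n (join us) = map join vss \<and> distinct vss \<and>
           (\<forall>vs\<in>set vss. vs \<noteq> [] \<and> (\<forall>v\<in>set vs. dyck v) \<and> pU vs = us)"
proof -
  have cl: "clen (join us) = length us - 1" using clen_join dy by blast
  have pa: "n = 2 * cnt Zero (join us) + (length us - 1)" using par_join[OF dy] len by simp
  have l1: "length us \<ge> 1" using ne by (cases us) auto
  consider (E0) "even n" "length us = 1" | (E3) "even n" "length us = 3" | (O1) "odd n" "length us = 2"
    | (G) "length us \<ge> 4"
  proof -
    have "length us \<ge> 4 \<or> (even n \<and> length us = 1) \<or> (even n \<and> length us = 3) \<or> (odd n \<and> length us = 2)"
      using pa l1 by presburger
    then show ?thesis using that by blast
  qed
  then show ?thesis
  proof cases
    case E0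
    then obtain b where u: "us = [b]" by (cases us) auto
    have b: "dyck b" using dy u by simp
    have "lam n (join us) = map join [[[], b, []], [Zero # b @ [One]]]"
      using E0 cl u by (simp add: lam_def Let_def)
    then show ?thesis using u b P1[of "[b]"] P6[OF b]
      by (intro exI[of _ "[[[], b, []], [Zero # b @ [One]]]"]) (auto simp: dyck_comb')
  next
    case E3
    then obtain b c d where u: "us = [b, c, d]"
      by (cases us; cases "tl us"; cases "tl (tl us)") auto
    have b: "dyck b" "dyck c" "dyck d" using dy u by auto
    let ?A = "[[], b, c, d, []]"
    let ?B = "[Zero # b @ One # c, d, []]"
    let ?C = "[Zero # b @ One # c @ Zero # d @ [One]]"
    let ?D = "[[], b, c @ Zero # d @ [One]]"
    have X: "Star # join us @ [Star] = join ?A" using X_join[of us] u by simp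
    have F: "ff (Star # join us @ [Star]) = join ?B" using K2[of b c "[d]"] b u by simp
    have L: "ll (Star # join us @ [Star]) = join ?D" using K3[of c d "[b]"] b u by simp
    have FL: "ff (ll (Star # join us @ [Star])) = join ?C" using K5[of b c d] b u by simp
    have "lam n (join us) = map join [?A, ?B, ?C, ?D]"
      using E3 cl u X F L FL by (simp add: lam_def Let_def del: join.simps)
    moreover have "pU ?A = us" using P1[of us] u by simp
    moreover have "pU ?B = us" using P2[of b c "[d]"] u b by simp
    moreover have "pU ?C = us" using P5[of b c d] u b by simp
    moreover have "pU ?D = us" using P3[of c d "[b]"] u b by simp
    ultimately show ?thesis using b
      by (intro exI[of _ "[?A, ?B, ?C, ?D]"]) (auto simp: dyck_comb')
  next
    case O1
    then obtain b c where u: "us = [b, c]"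
      by (cases us; cases "tl us") auto
    have b: "dyck b" "dyck c" using dy u by auto
    let ?A = "[[], b, c, []]"
    let ?B = "[Zero # b @ One # c, []]"
    let ?D = "[[], b @ Zero # c @ [One]]"
    have X: "Star # join us @ [Star] = join ?A" using X_join[of us] u by simp
    have F: "ff (Star # join us @ [Star]) = join ?B" using K2[of b c "[]"] b u by simp
    have L: "ll (Star # join us @ [Star]) = join ?D" using K3[of b c "[]"] b u by simp
    have "lam n (join us) = map join [?A, ?D, ?B]"
      using O1 cl u X F L by (simp add: lam_def Let_def del: join.simps)
    moreover have "pU ?A = us" using P1[of us] u by simp
    moreover have "pU ?B = us" using P2[of b c "[]"] u b by simp
    moreover have "pU ?D = us" using P3[of b c "[]"] u b by simp
    ultimately show ?thesis using b
      by (intro exI[of _ "[?A, ?D, ?B]"]) (auto simp: dyck_comb')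
  next
    case G
    then obtain b c r c' d' where u: "us = b # c # r @ [c', d']" using four_ex by blast
    have b: "dyck b" "dyck c" "dyck c'" "dyck d'" "\<forall>x\<in>set r. dyck x" using dy u by auto
    let ?A = "[] # b # c # r @ [c', d', []]"
    let ?B = "(Zero # b @ One # c) # r @ [c', d', []]"
    let ?C = "(Zero # b @ One # c) # r @ [c' @ Zero # d' @ [One]]"
    let ?D = "[] # b # c # r @ [c' @ Zero # d' @ [One]]"
    have X: "Star # join us @ [Star] = join ?A" using X_join[of us] u by simp
    have F: "ff (Star # join us @ [Star]) = join ?B" using K2[of b c "r @ [c', d']"] b u by simp
    have L: "ll (Star # join us @ [Star]) = join ?D" using K3[of c' d' "b # c # r"] b u by simp
    have FL: "ff (ll (Star # join us @ [Star])) = join ?C" using K4a[of b c c' d' r] b u by simp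
    have LF: "ll (ff (Star # join us @ [Star])) = join ?C" using K4b[of b c c' d' r] b u by simp
    have cl4: "clen (join us) \<ge> 3" using cl G by simp
    have PA: "pU ?A = us" using P1[of us] u by simp
    have PB: "pU ?B = us" using P2[of b c "r @ [c', d']"] u b by simp
    have PC: "pU ?C = us" using P4[of b c c' d' r] u b by simp
    have PD: "pU ?D = us" using P3[of c' d' "b # c # r"] u b by simp
    have dist: "distinct [?A, ?B, ?C, ?D]" by simp
    have dys: "\<forall>vs\<in>set [?A, ?B, ?C, ?D]. vs \<noteq> [] \<and> (\<forall>v\<in>set vs. dyck v)"
      using b by (auto simp: dyck_comb')
    show ?thesis
    proof (cases "even n")
      case True
      then have "lam n (join us) = map join [?A, ?B, ?C, ?D]"
        using cl4 X F L FL by (simp add: lam_def Let_def del: join.simps)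
      then show ?thesis using PA PB PC PD dist dys
        by (intro exI[of _ "[?A, ?B, ?C, ?D]"]) auto
    next
      case False
      then have "lam n (join us) = map join [?A, ?D, ?C, ?B]"
        using cl4 X F L LF by (simp add: lam_def Let_def del: join.simps)
      moreover have "distinct [?A, ?D, ?C, ?B]" using dist by auto
      moreover have "\<forall>vs\<in>set [?A, ?D, ?C, ?B]. vs \<noteq> [] \<and> (\<forall>v\<in>set vs. dyck v)" using dys by auto
      ultimately show ?thesis using PA PB PC PD
        by (intro exI[of _ "[?A, ?D, ?C, ?B]"]) auto
    qed
  qed
qed

lemma two_ex: "length vs \<ge> 2 \<Longrightarrow> \<exists>a m z. vs = a # m @ [z]"
proof -
  assume l: "length vs \<ge> 2"
  then obtain a t where u: "vs = a # t" by (cases vs) auto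
  then have "t \<noteq> []" using l by auto
  then obtain m z where "t = m @ [z]" by (metis rev_exhaust)
  then show ?thesis using u by blast
qed

lemma lam_len: "E \<in> set (lam n C) \<Longrightarrow> length E = length C + 2"
  by (auto simp: lam_def Let_def split: if_splits)

lemma gk_join: "us \<noteq> [] \<Longrightarrow> \<forall>u\<in>set us. dyck u \<Longrightarrow> gk_chain (join us)"
  by (auto simp: gk_chain_def)

lemma memb:
  assumes "us \<noteq> []" "\<forall>u\<in>set us. dyck u" "length (join us) = n" "D \<in> set (lam n (join us))"
  shows "\<exists>C\<in>GK n. D \<in> set (lam n C)"
  using assms gk_join[of us] by (auto simp: GK_def)

lemma cover:
  assumes "D \<in> GK (Suc (Suc n))"
  shows "\<exists>C\<in>GK n. D \<in> set (lam n C)"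
proof -
  obtain vs where v: "vs \<noteq> []" "\<forall>v\<in>set vs. dyck v" "D = join vs" and lD: "length D = Suc (Suc n)"
    using assms by (auto simp: GK_def gk_chain_def)
  consider (one) "length vs = 1" | (two) "length vs \<ge> 2"
  proof -
    have "length vs \<noteq> 0" using v by simp
    then have "length vs = 1 \<or> length vs \<ge> 2" by linarith
    then show ?thesis using that by blast
  qed
  then show ?thesis
  proof cases
    case one
    then obtain w where w: "vs = [w]" by (cases vs) auto
    have dw: "dyck w" using v w by simp
    have "w \<noteq> []" using v w lD by auto
    then obtain b c where bc: "w = Zero # b @ One # c" "dyck b" "dyck c" using dyck_dec dw by blast
    show ?thesis
    proof (cases "c = []")
      case True
      have Dd: "D = Zero # join [b] @ [One]" using v w bc True by simp
      have ln: "length (join [b]) = n" using Dd lD by simp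
      have pa: "n = 2 * cnt Zero (join [b]) + 0" using par_join[of "[b]"] bc ln by simp
      have cl: "clen (join [b]) = 0" using clen_join[of "[b]"] bc by simp
      have "D \<in> set (lam n (join [b]))" using Dd pa cl by (simp add: lam_def Let_def)
      then show ?thesis using memb[of "[b]" n D] bc ln by simp
    next
      case False
      then obtain c' d' where cd: "c = c' @ Zero # d' @ [One]" "dyck c'" "dyck d'" using dyck_decR bc by blast
      let ?us = "[b, c', d']"
      have Dd: "D = ff (ll (Star # join ?us @ [Star]))" using K5[of b c' d'] v w bc cd by simp
      have ln: "length (join ?us) = n" using Dd lD by simp
      have pa: "n = 2 * cnt Zero (join ?us) + 2" using par_join[of ?us] bc cd ln by simp
      have cl: "clen (join ?us) = 2" using clen_join[of ?us] bc cd by simp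
      have ev: "even n" using pa by simp
      have "D \<in> set (lam n (join ?us))" unfolding Dd using ev cl by (simp add: lam_def Let_def del: join.simps)
      then show ?thesis using memb[of ?us n D] bc cd ln by simp
    qed
  next
    case two
    then obtain a m z where amz: "vs = a # m @ [z]" using two_ex by blast
    have da: "dyck a" "dyck z" "\<forall>x\<in>set m. dyck x" using v amz by auto
    show ?thesis
    proof (cases "a = []")
      case aN: True
      show ?thesis
      proof (cases "z = []")
        case zN: True
        have "m \<noteq> []" using v amz aN zN lD by auto
        then have Dd: "D = Star # join m @ [Star]" using X_join[of m] v amz aN zN by simp
        have ln: "length (join m) = n" using Dd lD by simp
        have "D \<in> set (lam n (join m))" unfolding Dd by (simp add: lam_def Let_def del: join.simps)
        then show ?thesis using memb[of m n D] da ln \<open>m \<noteq> []\<close> by simp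
      next
        case False
        then obtain c' d' where cd: "z = c' @ Zero # d' @ [One]" "dyck c'" "dyck d'" using dyck_decR da by blast
        let ?us = "m @ [c', d']"
        have Dd: "D = ll (Star # join ?us @ [Star])" using K3[of c' d' m] v amz aN cd by simp
        have ln: "length (join ?us) = n" using Dd lD by simp
        have dus: "\<forall>u\<in>set ?us. dyck u" using da cd by auto
        have pa: "n = 2 * cnt Zero (join ?us) + (length m + 1)" using par_join[OF dus] ln by simp
        have cl: "clen (join ?us) = length m + 1" using clen_join[OF dus] by simp
        have "D \<in> set (lam n (join ?us))" unfolding Dd using pa cl
          by (simp add: lam_def Let_def del: join.simps) presburger
        then show ?thesis using memb[of ?us n D] dus ln by simp
      qed
    next
      case False
      then obtain b c where bc: "a = Zero # b @ One # c" "dyck b" "dyck c" using dyck_dec da by blast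
      show ?thesis
      proof (cases "z = []")
        case zN: True
        let ?us = "b # c # m"
        have Dd: "D = ff (Star # join ?us @ [Star])" using K2[of b c m] v amz zN bc by simp
        have ln: "length (join ?us) = n" using Dd lD by simp
        have dus: "\<forall>u\<in>set ?us. dyck u" using da bc by auto
        have pa: "n = 2 * cnt Zero (join ?us) + (length m + 1)" using par_join[OF dus] ln by simp
        have cl: "clen (join ?us) = length m + 1" using clen_join[OF dus] by simp
        have "D \<in> set (lam n (join ?us))" unfolding Dd using pa cl
          by (simp add: lam_def Let_def del: join.simps) presburger
        then show ?thesis using memb[of ?us n D] dus ln by simp
      next
        case False
        then obtain c' d' where cd: "z = c' @ Zero # d' @ [One]" "dyck c'" "dyck d'" using dyck_decR da by blast
        let ?us = "b # c # m @ [c', d']"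
        have D1: "D = ff (ll (Star # join ?us @ [Star]))" using K4a[of b c c' d' m] v amz bc cd by simp
        have D2: "D = ll (ff (Star # join ?us @ [Star]))" using K4b[of b c c' d' m] v amz bc cd by simp
        have ln: "length (join ?us) = n" using D1 lD by simp
        have dus: "\<forall>u\<in>set ?us. dyck u" using da bc cd by auto
        have cl: "clen (join ?us) = length m + 3" using clen_join[OF dus] by simp
        have "D \<in> set (lam n (join ?us))"
        proof (cases "even n")
          case True
          then show ?thesis unfolding D1 using cl by (simp add: lam_def Let_def del: join.simps)
        next
          case False
          then show ?thesis unfolding D2 using cl by (simp add: lam_def Let_def del: join.simps)
        qed
        then show ?thesis using memb[of ?us n D] dus ln by simp
      qed
    qed
  qed
qed

lemma child_props:
  assumes "C \<in> GK n"
  shows "(\<forall>D\<in>set (lam n C). D \<in> GK (Suc (Suc n)) \<and> par D = C) \<and> distinct (lam n C)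
         \<and> Star # C @ [Star] \<in> set (lam n C)"
proof -
  obtain us where u: "us \<noteq> []" "\<forall>u\<in>set us. dyck u" "C = join us" "length C = n"
    using assms by (auto simp: GK_def gk_chain_def)
  obtain vss where k: "lam n (join us) = map join vss" "distinct vss"
    "\<forall>vs\<in>set vss. vs \<noteq> [] \<and> (\<forall>v\<in>set vs. dyck v) \<and> pU vs = us"
    using kids[of us n] u by auto
  have A: "\<forall>D\<in>set (lam n C). D \<in> GK (Suc (Suc n)) \<and> par D = C"
  proof
    fix D assume D: "D \<in> set (lam n C)"
    then obtain vs where vs: "vs \<in> set vss" "D = join vs" using k u by auto
    have "gk_chain D" using vs k by (auto simp: gk_chain_def)
    moreover have "length D = Suc (Suc n)" using lam_len[OF D] u by simp
    moreover have "par D = C" using vs k u comps_join[of vs] by (simp add: par_def)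
    ultimately show "D \<in> GK (Suc (Suc n)) \<and> par D = C" by (simp add: GK_def)
  qed
  have "inj_on join (set vss)"
    using k(3) join_inj dyck_SF unfolding inj_on_def by meson
  then have B: "distinct (lam n C)" using k u by (simp add: distinct_map)
  have "Star # C @ [Star] \<in> set (lam n C)" by (simp add: lam_def Let_def)
  then show ?thesis using A B by simp
qed

lemma set_rho: "set (rho n C) = set (lam n C)"
  by (simp add: rho_def)

lemma distinct_rho: "distinct (rho n C) = distinct (lam n C)"
  by (simp add: rho_def)

lemma main: "distinct (Lambda n) \<and> set (Lambda n) = GK n"
proof (induction n rule: Lambda.induct)
  case 1
  have "[] \<in> GK 0" using gk_join[of "[[]]"] by (simp add: GK_def)
  then have "GK 0 = {[]}" by (auto simp: GK_def)
  then show ?case by simp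
next
  case 2
  have "[Star] \<in> GK 1" using gk_join[of "[[], []]"] by (simp add: GK_def)
  moreover have "C = [Star]" if ga: "C \<in> GK 1" for C
  proof -
    obtain us where u: "us \<noteq> []" "\<forall>u\<in>set us. dyck u" "C = join us" "length C = 1"
      using ga by (auto simp: GK_def gk_chain_def)
    have "1 = 2 * cnt Zero C + (length us - 1)" using par_join[OF u(2)] u by simp
    then have "length us - 1 = 1" by presburger
    then have "clen C = 1" using clen_join[OF u(2)] u by simp
    then have "cnt Star C = 1" by (simp add: clen_def)
    moreover obtain x where "C = [x]" using u(4) by (cases C) auto
    ultimately show ?thesis by (cases x) auto
  qed
  ultimately have "GK 1 = {[Star]}" by blast
  then show ?case by simp
next
  case (3 n)
  let ?L = "Lambda n"
  have IH: "distinct ?L" "set ?L = GK n" using 3 by auto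
  have cp: "\<And>C. C \<in> set ?L \<Longrightarrow> (\<forall>D\<in>set (lam n C). D \<in> GK (Suc (Suc n)) \<and> par D = C) \<and> distinct (lam n C)
         \<and> Star # C @ [Star] \<in> set (lam n C)"
    using child_props IH(2) by blast
  have inj: "inj_on (rho n) (set ?L)"
  proof (rule inj_onI)
    fix C C' assume C: "C \<in> set ?L" and C': "C' \<in> set ?L" and e: "rho n C = rho n C'"
    have "Star # C @ [Star] \<in> set (lam n C')" using cp[OF C] e set_rho by metis
    then have "par (Star # C @ [Star]) = C'" using cp[OF C'] by blast
    moreover have "par (Star # C @ [Star]) = C" using cp[OF C] by blast
    ultimately show "C = C'" by simp
  qed
  have dist: "distinct (concat (map (rho n) ?L))"
  proof (rule distinct_concat)
    show "distinct (map (rho n) ?L)" using IH(1) inj by (simp add: distinct_map)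
  next
    fix ys assume "ys \<in> set (map (rho n) ?L)"
    then show "distinct ys" using cp distinct_rho by auto
  next
    fix ys zs assume y: "ys \<in> set (map (rho n) ?L)" and z: "zs \<in> set (map (rho n) ?L)" and ne: "ys \<noteq> zs"
    obtain C where C: "C \<in> set ?L" "ys = rho n C" using y by auto
    obtain C' where C': "C' \<in> set ?L" "zs = rho n C'" using z by auto
    show "set ys \<inter> set zs = {}"
    proof (rule ccontr)
      assume "set ys \<inter> set zs \<noteq> {}"
      then obtain D where "D \<in> set (lam n C)" "D \<in> set (lam n C')" using C C' set_rho by auto
      then have "C = C'" using cp[OF C(1)] cp[OF C'(1)] by metis
      then show False using ne C C' by simp
    qed
  qed
  have "set (concat (map (rho n) ?L)) = GK (Suc (Suc n))"
  proof
    show "set (concat (map (rho n) ?L)) \<subseteq> GK (Suc (Suc n))"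
      using cp set_rho by auto
  next
    show "GK (Suc (Suc n)) \<subseteq> set (concat (map (rho n) ?L))"
    proof
      fix D assume "D \<in> GK (Suc (Suc n))"
      then obtain C where "C \<in> GK n" "D \<in> set (lam n C)" using cover by blast
      then show "D \<in> set (concat (map (rho n) ?L))" using IH(2) set_rho by auto
    qed
  qed
  then show ?case using dist by simp
qed

theorem lemma17:
  fixes n :: nat
  assumes "n \<ge> 1"
  shows "distinct (Lambda n) \<and> set (Lambda n) = {C. length C = n \<and> gk_chain C}"
  using main[of n] by (simp add: GK_def)

end
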